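(* For any real number $s\ge 1$ that is not an integer, $$\sum_{i=0}^{\lfloor s\rfloor+1}\binom{s}{i}<2^s+\frac{1}{4(s+1)}.$$
   Context: For real $s$ and integer $i\ge0$, $\binom{s}{i}=\frac{s(s-1)\cdots(s-i+1)}{i!}$ (with $\binom{s}{0}=1$). *)

theory Defs
  imports Complex_Main
begin

end

theory Submission
  imports Defs
begin

lemma deriv_step:
  fixes s x :: real and m :: nat
  assumes "x \<ge> 0"
  shows "((\<lambda>x. (\<Prod>i=0..<m. s - real i) * (1 + x) powr (s - real m)) has_real_derivative
          (\<Prod>i=0..<Suc m. s - real i) * (1 + x) powr (s - real (Suc m))) (at x)"
proof -
  have d: "((\<lambda>x. 1 + x) has_real_derivative 1) (at x)"
    by (auto intro!: derivative_eq_intros)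
  have "((\<lambda>z. z powr (s - real m)) has_real_derivative (s - real m) * (1+x) powr (s - real m - 1)) (at (1+x))"
    using assms by (intro has_real_derivative_powr) auto
  from DERIV_chain2[OF this d]
  have "((\<lambda>x. (1+x) powr (s - real m)) has_real_derivative (s - real m) * (1+x) powr (s - real m - 1) * 1) (at x)" .
  then have "((\<lambda>x. (\<Prod>i=0..<m. s - real i) * (1 + x) powr (s - real m)) has_real_derivative
      (\<Prod>i=0..<m. s - real i) * ((s - real m) * (1+x) powr (s - real m - 1) * 1)) (at x)"
    by (rule DERIV_cmult)
  moreover have "(\<Prod>i=0..<m. s - real i) * ((s - real m) * (1+x) powr (s - real m - 1) * 1)
     = (\<Prod>i=0..<Suc m. s - real i) * (1 + x) powr (s - real (Suc m))"
  proof -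
    have "s - real m - 1 = s - real (Suc m)" by simp
    then show ?thesis by (simp only: prod.atLeast0_lessThan_Suc)
  qed
  ultimately show ?thesis by (simp only:)
qed

theorem lemma2p2:
  fixes s :: real
  assumes "s \<ge> 1" and "s \<notin> \<int>"
  shows "(\<Sum>i = 0..nat \<lfloor>s\<rfloor> + 1. s gchoose i) < 2 powr s + 1 / (4 * (s + 1))"
proof -
  define n where "n = nat \<lfloor>s\<rfloor>"
  define t where "t = s - real n"
  have fl: "real_of_int \<lfloor>s\<rfloor> = real n" using assms(1) by (simp add: n_def)
  have tpos: "0 < t"
  proof -
    have "real n \<le> s" using fl by linarith
    moreover have "real n \<noteq> s" using assms(2) by (metis Ints_of_nat)
    ultimately show ?thesis unfolding t_def by simp
  qed
  have tlt: "t < 1" unfolding t_def using fl floor_correct[of s] by linarith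
  define P where "P m = (\<Prod>i=0..<m. s - real i)" for m
  define D where "D m x = P m * (1 + x) powr (s - real m)" for m x
  have "\<exists>\<xi>::real. 0 < \<xi> \<and> \<xi> < 1 \<and>
      D 0 1 = (\<Sum>m<n+2. (D m 0 / fact m) * 1 ^ m) + (D (n+2) \<xi> / fact (n+2)) * 1 ^ (n+2)"
  proof (rule Maclaurin[where diff = D])
    show "\<forall>m t. m < n+2 \<and> 0 \<le> t \<and> t \<le> 1 \<longrightarrow> DERIV (D m) t :> D (Suc m) t"
      unfolding D_def[abs_def] P_def using deriv_step by blast
  qed auto
  then obtain \<xi> :: real where xi: "0 < \<xi>" "\<xi> < 1"
    and eq: "D 0 1 = (\<Sum>m<n+2. D m 0 / fact m) + D (n+2) \<xi> / fact (n+2)" by auto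
  have D0: "D 0 1 = 2 powr s" by (simp add: D_def P_def)
  have Dm: "D m 0 / fact m = s gchoose m" for m
    by (simp add: D_def P_def gbinomial_prod_rev)
  have sumeq: "(\<Sum>i = 0..nat \<lfloor>s\<rfloor> + 1. s gchoose i) = (\<Sum>m<n+2. D m 0 / fact m)"
  proof -
    have "{0..nat \<lfloor>s\<rfloor> + 1} = {..<n+2}" by (auto simp: n_def)
    then show ?thesis by (simp add: Dm)
  qed
  have Pn2: "P (n+2) = P n * (t * (t - 1))"
    by (simp add: P_def prod.atLeast0_lessThan_Suc t_def algebra_simps)
  have Pnpos: "P n > 0" unfolding P_def
    by (rule prod_pos) (use tpos in \<open>auto simp: t_def\<close>)
  have Pnle: "P n \<le> fact (n+1)"
  proof -
    have "P n \<le> (\<Prod>i=0..<n. real (n + 1) - real i)" unfolding P_def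
      by (rule prod_mono) (use tlt tpos in \<open>auto simp: t_def\<close>)
    also have "\<dots> = fact (n+1)"
    proof -
      have "(\<Prod>i=0..<n. real (n + 1) - real i) = (real (n+1) gchoose n) * fact n"
        by (simp add: gbinomial_mult_fact')
      also have "\<dots> = real ((n+1) choose n) * fact n" by (simp only: binomial_gbinomial)
      also have "\<dots> = fact (n+1)" by (simp add: binomial_Suc_n algebra_simps)
      finally show ?thesis .
    qed
    finally show ?thesis .
  qed
  have pw: "(1 + \<xi>) powr (s - real (n+2)) \<le> 1"
  proof -
    have "(1 + \<xi>) powr (s - real (n+2)) \<le> (1 + \<xi>) powr 0"
      using xi tlt by (intro powr_mono) (auto simp: t_def)
    then show ?thesis using xi by simp
  qed
  have pw0: "(1 + \<xi>) powr (s - real (n+2)) \<ge> 0" by simp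
  have tt: "t * (1 - t) \<le> 1/4"
  proof -
    have "0 \<le> (t - 1/2)^2" by simp
    then show ?thesis by (simp add: power2_eq_square algebra_simps)
  qed
  define R where "R = P n * (t * (1 - t)) * (1 + \<xi>) powr (s - real (n+2)) / fact (n+2)"
  have Req: "D (n+2) \<xi> / fact (n+2) = - R"
    unfolding R_def D_def Pn2 minus_divide_left by (simp add: algebra_simps)
  have "P n * (t * (1 - t)) * (1 + \<xi>) powr (s - real (n+2)) \<le> fact (n+1) * (1/4) * 1"
    using Pnpos Pnle tt pw pw0 tpos tlt
    by (intro mult_mono) auto
  then have "R \<le> fact (n+1) * (1/4) / fact (n+2)"
    unfolding R_def by (intro divide_right_mono) auto
  also have "\<dots> = 1 / (4 * (real n + 2))"
  proof -
    have f: "(fact (n+2)::real) = (real n + 2) * fact (n+1)"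
      by (simp add: algebra_simps)
    have g: "F * (1/4) / ((real n + 2) * F) = 1 / (4 * (real n + 2))" if "F > 0" for F :: real
    proof -
      have "(real n + 2) * F > 0" using that by simp
      then show ?thesis using that by (simp add: field_simps)
    qed
    show ?thesis unfolding f by (rule g) simp
  qed
  also have "\<dots> < 1 / (4 * (s + 1))"
    using tpos tlt by (simp add: t_def frac_less2 divide_strict_left_mono) 
  finally have "R < 1 / (4 * (s + 1))" .
  moreover have "(\<Sum>m<n+2. D m 0 / fact m) = 2 powr s + R"
    using eq D0 Req by simp
  ultimately show ?thesis using sumeq by simp
qed

end
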